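(* Let $\mathbf a=(a_1,\dots,a_n)$ with all $a_i\ge0$, and on $\mathfrak H^{2n+1}=\mathbb R^{2n+1}$ let $\xi_{\mathbf a}$ be the Reeb vector field of the contact form $\eta_{\mathbf a}=\big(dz-\sum_iy_idx_i\big)/\big(1+\sum_ia_i(x_i^2+y_i^2)\big)$. Then the flow of $\xi_{\mathbf a}$ generates a free proper action $\mathcal A$ of $\mathbb R$ on $\mathfrak H^{2n+1}$, and the quotient space $\mathfrak H^{2n+1}/\mathcal A(\mathbb R)$, with the complex structure induced from the transverse complex structure $J$, is biholomorphic to $\mathbb C^n$.
   Context: Coordinates on $\mathbb R^{2n+1}$ are $(x_1,\dots,x_n,y_1,\dots,y_n,z)$. The CR structure is $\mathcal D=\ker\eta_{\mathbf a}=\ker(dz-\sum_iy_idx_i)$ with $J(\partial_{y_i})=\partial_{x_i}+y_i\partial_z$, $J(\partial_{x_i}+y_i\partial_z)=-\partial_{y_i}$; $\xi_{\mathbf a}$ is determined by $\eta_{\mathbf a}(\xi_{\mathbf a})=1$, $\iota_{\xi_{\mathbf a}}d\eta_{\mathbf a}=0$, and it is an infinitesimal CR transformation, so $J$ descends to an almost complex structure on the orbit space. *)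

theory Defs
  imports "HOL-Analysis.Analysis"
begin

text \<open>Points of the Heisenberg group H^{2n+1} = R^{2n+1} are triples (x, y, z)
  with x, y in R^n (index type 'n) and z in R.  Tangent vectors use the same
  coordinates (dx-part, dy-part, dz-part).\<close>

type_synonym 'n pt = "(real^'n) \<times> (real^'n) \<times> real"

fun Ck :: "nat \<Rightarrow> ('a::real_normed_vector \<Rightarrow> 'b::real_normed_vector) \<Rightarrow> bool" where
  "Ck 0 f = continuous_on UNIV f"
| "Ck (Suc k) f = (\<exists>f'. (\<forall>x. (f has_derivative f' x) (at x)) \<and> (\<forall>v. Ck k (\<lambda>x. f' x v)))"

definition smooth :: "('a::real_normed_vector \<Rightarrow> 'b::real_normed_vector) \<Rightarrow> bool" where
  "smooth f \<longleftrightarrow> (\<forall>k. Ck k f)"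

definition eta :: "real^('n::finite) \<Rightarrow> 'n pt \<Rightarrow> 'n pt \<Rightarrow> real" where
  "eta a p v = (case p of (x, y, z) \<Rightarrow> case v of (u, w, c) \<Rightarrow>
      (c - (\<Sum>i\<in>UNIV. y$i * u$i)) / (1 + (\<Sum>i\<in>UNIV. a$i * ((x$i)^2 + (y$i)^2))))"

text \<open>Exterior derivative of a 1-form theta (given as p \<mapsto> covector), evaluated
  on the constant vector fields u, v: d theta(u,v) = u(theta(v)) - v(theta(u)).\<close>
definition dform :: "('m::real_normed_vector \<Rightarrow> 'm \<Rightarrow> real) \<Rightarrow> 'm \<Rightarrow> 'm \<Rightarrow> 'm \<Rightarrow> real" where
  "dform \<theta> p u v =
     frechet_derivative (\<lambda>q. \<theta> q v) (at p) u - frechet_derivative (\<lambda>q. \<theta> q u) (at p) v"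

definition is_reeb :: "('m::real_normed_vector \<Rightarrow> 'm \<Rightarrow> real) \<Rightarrow> ('m \<Rightarrow> 'm) \<Rightarrow> bool" where
  "is_reeb \<theta> \<xi> \<longleftrightarrow> (\<forall>p. \<theta> p (\<xi> p) = 1 \<and> (\<forall>v. dform \<theta> p (\<xi> p) v = 0))"

definition Dist :: "('n::finite) pt \<Rightarrow> 'n pt set" where
  "Dist p = {v. case p of (x, y, z) \<Rightarrow> case v of (u, w, c) \<Rightarrow> c - (\<Sum>i\<in>UNIV. y$i * u$i) = 0}"

text \<open>The complex structure J on D: J(d/dy_i) = d/dx_i + y_i d/dz,
  J(d/dx_i + y_i d/dz) = - d/dy_i.  A vector v = sum u_i X_i + sum w_i Y_i of D_p
  (X_i = d/dx_i + y_i d/dz, Y_i = d/dy_i) has coordinates (u, w, sum y_i u_i)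
  and is mapped to sum w_i X_i - sum u_i Y_i = (w, -u, sum y_i w_i).\<close>
definition Jcr :: "('n::finite) pt \<Rightarrow> 'n pt \<Rightarrow> 'n pt" where
  "Jcr p v = (case p of (x, y, z) \<Rightarrow> case v of (u, w, c) \<Rightarrow>
      (w, - u, \<Sum>i\<in>UNIV. y$i * w$i))"

definition free_proper_R_action :: "(real \<times> 'm::real_normed_vector \<Rightarrow> 'm) \<Rightarrow> bool" where
  "free_proper_R_action \<phi> \<longleftrightarrow>
     (\<forall>p. \<phi> (0, p) = p) \<and>
     (\<forall>s t p. \<phi> (s + t, p) = \<phi> (s, \<phi> (t, p))) \<and>
     (\<forall>t p. \<phi> (t, p) = p \<longrightarrow> t = 0) \<and>
     (\<forall>K. compact K \<longrightarrow> compact {(t, p). (\<phi> (t, p), p) \<in> K})"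

end

theory Submission
  imports Defs
begin


lemma CkSucI:
  assumes "\<forall>x. (f has_derivative f' x) (at x)" "\<forall>v. Ck k (\<lambda>x. f' x v)"
  shows "Ck (Suc k) f"
  using assms by (simp only: Ck.simps) (rule exI[of _ f'], blast)

lemma CkSucE:
  assumes "Ck (Suc k) f"
  obtains f' where "\<forall>x. (f has_derivative f' x) (at x)" "\<forall>v. Ck k (\<lambda>x. f' x v)"
  using assms by (simp only: Ck.simps) blast

lemma Ck0: "Ck 0 f \<longleftrightarrow> continuous_on UNIV f" by simp

declare Ck.simps[simp del]

lemma Ck_Suc_imp: "Ck (Suc k) f \<Longrightarrow> Ck k f"
proof (induction k arbitrary: f)
  case 0
  then obtain f' where "\<forall>x. (f has_derivative f' x) (at x)" by (rule CkSucE)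
  then have "continuous (at x) f" for x using has_derivative_continuous by blast
  then show ?case unfolding Ck0 by (simp add: continuous_at_imp_continuous_on)
next
  case (Suc k)
  from Suc.prems obtain f' where f': "\<forall>x. (f has_derivative f' x) (at x)" "\<forall>v. Ck (Suc k) (\<lambda>x. f' x v)"
    by (rule CkSucE)
  have "\<forall>v. Ck k (\<lambda>x. f' x v)" using Suc.IH f'(2) by blast
  then show ?case using f'(1) by (rule CkSucI[rotated])
qed

lemma Ck_const: "Ck k (\<lambda>x. c)"
proof (induction k arbitrary: c)
  case 0 then show ?case unfolding Ck0 by simp
next
  case (Suc k) show ?case
    by (rule CkSucI[where f'="\<lambda>x v. 0"]) (simp_all add: Suc.IH)
qed

lemma Ck_linear: "bounded_linear L \<Longrightarrow> Ck k L"
proof (induction k)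
  case 0 then show ?case unfolding Ck0 by (simp add: linear_continuous_on)
next
  case (Suc k) show ?case
    by (rule CkSucI[where f'="\<lambda>x. L"]) (simp_all add: bounded_linear_imp_has_derivative Ck_const Suc.prems)
qed

lemma Ck_linear_comp: "bounded_linear L \<Longrightarrow> Ck k f \<Longrightarrow> Ck k (\<lambda>x. L (f x))"
proof (induction k arbitrary: f)
  case 0 then show ?case unfolding Ck0
    by (auto intro: continuous_on_compose2[OF linear_continuous_on] )
next
  case (Suc k)
  from Suc.prems(2) obtain f' where f': "\<forall>x. (f has_derivative f' x) (at x)" "\<forall>v. Ck k (\<lambda>x. f' x v)"
    by (rule CkSucE)
  show ?case
    apply (rule CkSucI[where f'="\<lambda>x v. L (f' x v)"])
    using Suc.prems(1) f' Suc.IH by (simp_all add: bounded_linear.has_derivative)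
qed

lemma Ck_add: "Ck k f \<Longrightarrow> Ck k g \<Longrightarrow> Ck k (\<lambda>x. f x + g x)"
proof (induction k arbitrary: f g)
  case 0 then show ?case unfolding Ck0 by (auto intro: continuous_on_add)
next
  case (Suc k)
  from Suc.prems(1) obtain f' where f': "\<forall>x. (f has_derivative f' x) (at x)" "\<forall>v. Ck k (\<lambda>x. f' x v)"
    by (rule CkSucE)
  from Suc.prems(2) obtain g' where g': "\<forall>x. (g has_derivative g' x) (at x)" "\<forall>v. Ck k (\<lambda>x. g' x v)"
    by (rule CkSucE)
  show ?case
    apply (rule CkSucI[where f'="\<lambda>x v. f' x v + g' x v"])
    using f' g' Suc.IH by (simp_all add: has_derivative_add)
qed

lemma Ck_sum: "finite A \<Longrightarrow> (\<And>i. i \<in> A \<Longrightarrow> Ck k (f i)) \<Longrightarrow> Ck k (\<lambda>x. \<Sum>i\<in>A. f i x)"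
  by (induction A rule: finite_induct) (auto intro: Ck_add Ck_const)

lemma Ck_bilinear:
  fixes prod :: "'a::real_normed_vector \<Rightarrow> 'b::real_normed_vector \<Rightarrow> 'c::real_normed_vector"
    and f :: "'d::real_normed_vector \<Rightarrow> 'a" and g :: "'d \<Rightarrow> 'b"
  assumes "bounded_bilinear prod"
  shows "Ck k f \<Longrightarrow> Ck k g \<Longrightarrow> Ck k (\<lambda>x. prod (f x) (g x))"
proof (induction k arbitrary: f g)
  case 0 then show ?case unfolding Ck0
    using bounded_bilinear.continuous_on[OF assms] by auto
next
  case (Suc k)
  from Suc.prems(1) obtain f' where f': "\<forall>x. (f has_derivative f' x) (at x)" "\<forall>v. Ck k (\<lambda>x. f' x v)"
    by (rule CkSucE)
  from Suc.prems(2) obtain g' where g': "\<forall>x. (g has_derivative g' x) (at x)" "\<forall>v. Ck k (\<lambda>x. g' x v)"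
    by (rule CkSucE)
  have fk: "Ck k f" "Ck k g" using Suc.prems Ck_Suc_imp by blast+
  show ?case
    apply (rule CkSucI[where f'="\<lambda>x v. prod (f x) (g' x v) + prod (f' x v) (g x)"])
    using f' g' fk by (simp_all add: bounded_bilinear.FDERIV[OF assms] Ck_add Suc.IH)
qed

lemma Ck_pair: "Ck k f \<Longrightarrow> Ck k g \<Longrightarrow> Ck k (\<lambda>x. (f x, g x))"
proof (induction k arbitrary: f g)
  case 0 then show ?case unfolding Ck0 by (auto intro: continuous_on_Pair)
next
  case (Suc k)
  from Suc.prems(1) obtain f' where f': "\<forall>x. (f has_derivative f' x) (at x)" "\<forall>v. Ck k (\<lambda>x. f' x v)"
    by (rule CkSucE)
  from Suc.prems(2) obtain g' where g': "\<forall>x. (g has_derivative g' x) (at x)" "\<forall>v. Ck k (\<lambda>x. g' x v)"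
    by (rule CkSucE)
  show ?case
    apply (rule CkSucI[where f'="\<lambda>x v. (f' x v, g' x v)"])
    using f' g' Suc.IH by (simp_all add: has_derivative_Pair)
qed

lemma has_derivative_vec_lambda:
  fixes f :: "'i::finite \<Rightarrow> 'a::real_normed_vector \<Rightarrow> 'b::real_normed_vector"
  assumes "\<And>i. (f i has_derivative f' i) F"
  shows "((\<lambda>x. \<chi> i. f i x) has_derivative (\<lambda>h. \<chi> i. f' i h)) F"
proof -
  have bl: "bounded_linear (f' i)" for i using assms has_derivative_bounded_linear by blast
  have BL: "bounded_linear (\<lambda>h. \<chi> i. f' i h)"
  proof
    show "(\<chi> i. f' i (b1 + b2)) = (\<chi> i. f' i b1) + (\<chi> i. f' i b2)" for b1 b2
      using bl by (simp add: vec_eq_iff linear_add bounded_linear.linear)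
    show "(\<chi> i. f' i (r *\<^sub>R b)) = r *\<^sub>R (\<chi> i. f' i b)" for r b
      using bl by (simp add: vec_eq_iff linear_scale bounded_linear.linear)
    have "\<forall>i. \<exists>K. \<forall>x. norm (f' i x) \<le> norm x * K"
      using bl bounded_linear.bounded by blast
    then obtain K where K: "\<And>i. \<forall>x. norm (f' i x) \<le> norm x * K i"
      by metis
    show "\<exists>K. \<forall>x. norm (\<chi> i. f' i x) \<le> norm x * K"
    proof (intro exI allI)
      fix x
      have "norm (\<chi> i. f' i x) \<le> (\<Sum>i\<in>UNIV. norm ((\<chi> i. f' i x) $ i))"
        by (simp add: norm_vec_def L2_set_le_sum)
      also have "\<dots> \<le> (\<Sum>i\<in>UNIV. norm x * K i)"
        using K by (intro sum_mono) simp
      finally show "norm (\<chi> i. f' i x) \<le> norm x * (\<Sum>i\<in>UNIV. K i)"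
        by (simp add: sum_distrib_left)
    qed
  qed
  let ?L = "Lim F (\<lambda>x. x)"
  have TL: "((\<lambda>y. \<chi> i. ((f i y - f i ?L) - f' i (y - ?L)) /\<^sub>R norm (y - ?L)) \<longlongrightarrow> (\<chi> i. 0)) F"
    using assms unfolding has_derivative_def by (intro tendsto_vec_lambda) auto
  have EQ: "(\<lambda>y. \<chi> i. ((f i y - f i ?L) - f' i (y - ?L)) /\<^sub>R norm (y - ?L))
     = (\<lambda>y. (((\<chi> i. f i y) - (\<chi> i. f i ?L)) - (\<chi> i. f' i (y - ?L))) /\<^sub>R norm (y - ?L))"
    by (simp add: fun_eq_iff vec_eq_iff)
  have Z: "(\<chi> i. 0) = (0::'b^'i)" by (simp add: vec_eq_iff)
  have TL': "((\<lambda>y. (((\<chi> i. f i y) - (\<chi> i. f i ?L)) - (\<chi> i. f' i (y - ?L))) /\<^sub>R norm (y - ?L)) \<longlongrightarrow> 0) F"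
    using TL by (simp only: EQ Z)
  show ?thesis unfolding has_derivative_def by (rule conjI[OF BL TL'])
qed



lemma Ck_diff: "Ck k f \<Longrightarrow> Ck k g \<Longrightarrow> Ck k (\<lambda>x. f x - g x)"
proof -
  assume "Ck k f" "Ck k g"
  then have "Ck k (\<lambda>x. f x + (- g x))"
    using Ck_add Ck_linear_comp[OF bounded_linear_minus[OF bounded_linear_ident]] by blast
  then show ?thesis by simp
qed

lemma Ck_vec:
  fixes f :: "'i::finite \<Rightarrow> 'a::real_normed_vector \<Rightarrow> 'b::real_normed_vector"
  shows "(\<And>i. Ck k (f i)) \<Longrightarrow> Ck k (\<lambda>x. \<chi> i. f i x)"
proof (induction k arbitrary: f)
  case 0 then show ?case unfolding Ck0 by (simp add: continuous_on_vec_lambda)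
next
  case (Suc k)
  have "\<forall>i. \<exists>f'. (\<forall>x. (f i has_derivative f' x) (at x)) \<and> (\<forall>v. Ck k (\<lambda>x. f' x v))"
    using Suc.prems CkSucE by metis
  then obtain f' where f': "\<And>i. (\<forall>x. (f i has_derivative f' i x) (at x)) \<and> (\<forall>v. Ck k (\<lambda>x. f' i x v))"
    by metis
  show ?case
    apply (rule CkSucI[where f'="\<lambda>x v. \<chi> i. f' i x v"])
    using f' by (simp_all add: has_derivative_vec_lambda Suc.IH)
qed

lemma Ck_comp:
  fixes g :: "'b::euclidean_space \<Rightarrow> 'c::real_normed_vector" and f :: "'a::real_normed_vector \<Rightarrow> 'b"
  shows "Ck k f \<Longrightarrow> Ck k g \<Longrightarrow> Ck k (\<lambda>x. g (f x))"
proof (induction k arbitrary: f g)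
  case 0 then show ?case using continuous_on_compose2[of UNIV g UNIV f] unfolding Ck0 by simp
next
  case (Suc k)
  from Suc.prems(1) obtain f' where f': "\<forall>x. (f has_derivative f' x) (at x)" "\<forall>v. Ck k (\<lambda>x. f' x v)"
    by (rule CkSucE)
  from Suc.prems(2) obtain g' where g': "\<forall>x. (g has_derivative g' x) (at x)" "\<forall>v. Ck k (\<lambda>x. g' x v)"
    by (rule CkSucE)
  have fk: "Ck k f" using Suc.prems Ck_Suc_imp by blast
  have lin: "linear (g' y)" for y using g' has_derivative_linear by blast
  have rep: "g' (f x) (f' x v) = (\<Sum>b\<in>Basis. (f' x v \<bullet> b) *\<^sub>R g' (f x) b)" for x v
  proof -
    have "g' (f x) (f' x v) = g' (f x) (\<Sum>b\<in>Basis. (f' x v \<bullet> b) *\<^sub>R b)"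
      by (simp add: euclidean_representation)
    also have "\<dots> = (\<Sum>b\<in>Basis. (f' x v \<bullet> b) *\<^sub>R g' (f x) b)"
      using lin by (simp add: linear_sum linear_scale)
    finally show ?thesis .
  qed
  have ck: "Ck k (\<lambda>x. g' (f x) (f' x v))" for v
    unfolding rep
    by (intro Ck_sum finite_Basis Ck_bilinear[OF bounded_bilinear_scaleR]
        Ck_linear_comp[OF bounded_linear_inner_left] Suc.IH fk f'(2)[rule_format] g'(2)[rule_format])
  show ?case
    apply (rule CkSucI[where f'="\<lambda>x v. g' (f x) (f' x v)"])
    using f' g' ck by (simp_all add: has_derivative_compose)
qed

lemma Ck_sin_cos: "Ck k (sin :: real \<Rightarrow> real) \<and> Ck k (cos :: real \<Rightarrow> real)"
proof (induction k)
  case 0 then show ?case unfolding Ck0 by (simp add: continuous_on_sin continuous_on_cos continuous_on_id)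
next
  case (Suc k)
  have ms: "Ck k (\<lambda>x. - sin x :: real)"
    using Suc Ck_linear_comp[OF bounded_linear_minus[OF bounded_linear_ident]] by blast
  have s: "Ck (Suc k) (sin :: real \<Rightarrow> real)"
    apply (rule CkSucI[where f'="\<lambda>x v. cos x * v"])
    subgoal using has_field_derivative_imp_has_derivative[OF DERIV_sin] by blast
    subgoal by (rule allI, rule Ck_bilinear[OF bounded_bilinear_mult]) (use Suc in \<open>simp_all add: Ck_const\<close>)
    done
  have c: "Ck (Suc k) (cos :: real \<Rightarrow> real)"
    apply (rule CkSucI[where f'="\<lambda>x v. - sin x * v"])
    subgoal using has_field_derivative_imp_has_derivative[OF DERIV_cos] by blast
    subgoal by (rule allI, rule Ck_bilinear[OF bounded_bilinear_mult]) (use ms in \<open>simp_all add: Ck_const\<close>)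
    done
  show ?case using s c ..
qed

lemma Ck_cexp: "Ck k (exp :: complex \<Rightarrow> complex)"
proof (induction k)
  case 0 then show ?case unfolding Ck0 by (simp add: continuous_on_exp continuous_on_id)
next
  case (Suc k)
  show ?case
    apply (rule CkSucI[where f'="\<lambda>x v. exp x * v"])
    subgoal using has_field_derivative_imp_has_derivative[OF DERIV_exp] by blast
    subgoal by (rule allI, rule Ck_bilinear[OF bounded_bilinear_mult]) (use Suc in \<open>simp_all add: Ck_const\<close>)
    done
qed

lemma smooth_id: "smooth (\<lambda>x. x)" unfolding smooth_def by (simp add: Ck_linear)
lemma smooth_const: "smooth (\<lambda>x. c)" unfolding smooth_def by (simp add: Ck_const)
lemma smooth_fst: "smooth f \<Longrightarrow> smooth (\<lambda>x. fst (f x))"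
  unfolding smooth_def using Ck_linear_comp[OF bounded_linear_fst, of _ f] by blast
lemma smooth_snd: "smooth f \<Longrightarrow> smooth (\<lambda>x. snd (f x))"
  unfolding smooth_def using Ck_linear_comp[OF bounded_linear_snd, of _ f] by blast
lemma smooth_nth: "smooth f \<Longrightarrow> smooth (\<lambda>x. f x $ i)"
  unfolding smooth_def using Ck_linear_comp[OF bounded_linear_vec_nth[of i], of _ f] by blast
lemma smooth_of_real: "smooth f \<Longrightarrow> smooth (\<lambda>x. of_real (f x) :: complex)"
  unfolding smooth_def using Ck_linear_comp[OF bounded_linear_of_real, of _ f] by blast
lemma smooth_add: "smooth f \<Longrightarrow> smooth g \<Longrightarrow> smooth (\<lambda>x. f x + g x)"
  unfolding smooth_def by (blast intro: Ck_add)
lemma smooth_diff: "smooth f \<Longrightarrow> smooth g \<Longrightarrow> smooth (\<lambda>x. f x - g x)"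
  unfolding smooth_def by (blast intro: Ck_diff)
lemma smooth_mult:
  fixes f g :: "'a::real_normed_vector \<Rightarrow> 'b::real_normed_algebra"
  shows "smooth f \<Longrightarrow> smooth g \<Longrightarrow> smooth (\<lambda>x. f x * g x)"
  unfolding smooth_def by (blast intro: Ck_bilinear[OF bounded_bilinear_mult])
lemma smooth_divide_const:
  fixes f :: "'a::real_normed_vector \<Rightarrow> 'b::real_normed_field"
  shows "smooth f \<Longrightarrow> smooth (\<lambda>x. f x / c)"
  unfolding smooth_def by (blast intro: Ck_linear_comp[OF bounded_linear_divide])
lemma smooth_sum: "finite A \<Longrightarrow> (\<And>i. i \<in> A \<Longrightarrow> smooth (f i)) \<Longrightarrow> smooth (\<lambda>x. \<Sum>i\<in>A. f i x)"
  unfolding smooth_def by (blast intro: Ck_sum)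
lemma smooth_pair: "smooth f \<Longrightarrow> smooth g \<Longrightarrow> smooth (\<lambda>x. (f x, g x))"
  unfolding smooth_def by (blast intro: Ck_pair)
lemma smooth_vec:
  fixes f :: "'i::finite \<Rightarrow> 'a::real_normed_vector \<Rightarrow> 'b::real_normed_vector"
  shows "(\<And>i. smooth (f i)) \<Longrightarrow> smooth (\<lambda>x. \<chi> i. f i x)"
  unfolding smooth_def by (blast intro: Ck_vec)
lemma smooth_sin: "smooth f \<Longrightarrow> smooth (\<lambda>x. sin (f x :: real))"
  unfolding smooth_def using Ck_sin_cos Ck_comp[where g=sin] by blast
lemma smooth_cos: "smooth f \<Longrightarrow> smooth (\<lambda>x. cos (f x :: real))"
  unfolding smooth_def using Ck_sin_cos Ck_comp[where g=cos] by blast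
lemma smooth_cexp: "smooth f \<Longrightarrow> smooth (\<lambda>x. exp (f x :: complex))"
  unfolding smooth_def using Ck_cexp Ck_comp[where g=exp] by blast

lemma smooth_continuous: "smooth f \<Longrightarrow> continuous_on UNIV f"
  unfolding smooth_def using Ck0 by blast



definition Dn :: "real^'n::finite \<Rightarrow> 'n pt \<Rightarrow> real" where
  "Dn a q = 1 + (\<Sum>i\<in>UNIV. a$i * ((fst q $ i)^2 + (fst (snd q) $ i)^2))"
definition Nm :: "'n::finite pt \<Rightarrow> 'n pt \<Rightarrow> real" where
  "Nm q v = snd (snd v) - (\<Sum>i\<in>UNIV. fst (snd q) $ i * fst v $ i)"
definition dD :: "real^'n::finite \<Rightarrow> 'n pt \<Rightarrow> 'n pt \<Rightarrow> real" where
  "dD a q e = (\<Sum>i\<in>UNIV. a$i * (2 * fst q $ i * fst e $ i + 2 * fst (snd q) $ i * fst (snd e) $ i))"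
definition etaD :: "real^'n::finite \<Rightarrow> 'n pt \<Rightarrow> 'n pt \<Rightarrow> 'n pt \<Rightarrow> real" where
  "etaD a q v e = - (\<Sum>i\<in>UNIV. fst (snd e) $ i * fst v $ i) / Dn a q - Nm q v * dD a q e / (Dn a q)^2"

lemma eta_alt: "eta a q v = Nm q v / Dn a q"
  by (cases q; cases v) (simp add: eta_def Nm_def Dn_def)

lemma Dn_ge1: "\<forall>i. a$i \<ge> 0 \<Longrightarrow> Dn a q \<ge> 1"
  unfolding Dn_def by (auto intro!: sum_nonneg)

lemma hd_c1: "((\<lambda>x::'n::finite pt. fst x $ i) has_derivative (\<lambda>x. fst x $ i)) F"
  by (intro bounded_linear_imp_has_derivative bounded_linear_compose[OF bounded_linear_vec_nth bounded_linear_fst])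
lemma hd_c2: "((\<lambda>x::'n::finite pt. fst (snd x) $ i) has_derivative (\<lambda>x. fst (snd x) $ i)) F"
  by (intro bounded_linear_imp_has_derivative bounded_linear_compose[OF bounded_linear_vec_nth]
      bounded_linear_compose[OF bounded_linear_fst bounded_linear_snd])
lemma hd_c3: "((\<lambda>x::'n::finite pt. snd (snd x)) has_derivative (\<lambda>x. snd (snd x))) F"
  by (intro bounded_linear_imp_has_derivative bounded_linear_compose[OF bounded_linear_snd bounded_linear_snd])

lemma ND: "((\<lambda>q. Nm q v) has_derivative (\<lambda>e. 0 - (\<Sum>i\<in>UNIV. fst (snd e) $ i * fst v $ i))) F"
  unfolding Nm_def by (intro has_derivative_diff has_derivative_const has_derivative_sum has_derivative_mult_left hd_c2)

lemma Dn_alt: "Dn a q = 1 + (\<Sum>i\<in>UNIV. a$i * (fst q $ i * fst q $ i + fst (snd q) $ i * fst (snd q) $ i))"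
  by (simp add: Dn_def power2_eq_square)

lemma DD0: "((\<lambda>q. Dn a q) has_derivative (\<lambda>e. 0 + (\<Sum>i\<in>UNIV. a$i * ((fst q $ i * fst e $ i + fst e $ i * fst q $ i)
      + (fst (snd q) $ i * fst (snd e) $ i + fst (snd e) $ i * fst (snd q) $ i))))) (at q)"
  unfolding Dn_alt
  by (intro has_derivative_add has_derivative_const has_derivative_sum has_derivative_mult_right
      has_derivative_mult hd_c1 hd_c2)

lemma DD: "((\<lambda>q. Dn a q) has_derivative dD a q) (at q)"
  apply (rule has_derivative_eq_rhs[OF DD0])
  apply (rule ext)
  apply (simp add: dD_def)
  apply (rule sum.cong)
   apply (simp_all add: algebra_simps)
  done

lemma eta_deriv:
  assumes "\<forall>i. a$i \<ge> 0"
  shows "((\<lambda>q. eta a q v) has_derivative etaD a q v) (at q)"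
proof -
  have D0: "Dn a q \<noteq> 0" using Dn_ge1[OF assms, of q] by simp
  have "((\<lambda>q. Nm q v / Dn a q) has_derivative etaD a q v) (at q)"
    apply (rule has_derivative_eq_rhs)
     apply (rule has_derivative_divide[OF ND DD D0])
    apply (rule ext)
    using D0 apply (simp add: etaD_def power2_eq_square field_simps)
    done
  then show ?thesis by (simp add: eta_alt)
qed

lemma dform_eta:
  assumes "\<forall>i. a$i \<ge> 0"
  shows "dform (eta a) p u v = etaD a p v u - etaD a p u v"
  unfolding dform_def
  by (simp add: frechet_derivative_at[OF eta_deriv[OF assms], symmetric])

definition xi0 :: "real^'n::finite \<Rightarrow> 'n pt \<Rightarrow> 'n pt" where
  "xi0 a p = ((\<chi> i. -2 * a$i * fst (snd p) $ i), (\<chi> i. 2 * a$i * fst p $ i),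
     Dn a p - 2 * (\<Sum>i\<in>UNIV. a$i * (fst (snd p) $ i)^2))"

lemma sum3: "-(sum A S :: real) + sum B S + sum C S = sum (\<lambda>i. -A i + B i + C i) S"
  by (simp only: sum.distrib sum_negf)

lemma sum_axis_l: "(\<Sum>i\<in>UNIV. W $ i * axis j (1::real) $ i) = W $ j"
  by (subst sum.cong[OF refl, where h="\<lambda>i. if i = j then W$j else 0"]) (simp_all add: axis_def)
lemma sum_axis_r: "(\<Sum>i\<in>UNIV. axis j (1::real) $ i * W $ i) = W $ j"
  by (subst sum.cong[OF refl, where h="\<lambda>i. if i = j then W$j else 0"]) (simp_all add: axis_def)

lemma dD_ex: "dD a p (axis j 1, 0, 0) = 2 * a$j * fst p $ j"
  unfolding dD_def
  by (subst sum.cong[OF refl, where h="\<lambda>i. if i = j then 2 * a$j * fst p $ j else 0"]) (auto simp: axis_def)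
lemma dD_ey: "dD a p (0, axis j 1, 0) = 2 * a$j * fst (snd p) $ j"
  unfolding dD_def
  by (subst sum.cong[OF refl, where h="\<lambda>i. if i = j then 2 * a$j * fst (snd p) $ j else 0"]) (auto simp: axis_def)
lemma dD_ez: "dD a p (0, 0, 1) = 0"
  unfolding dD_def by simp
lemma Nm_ex: "Nm p (axis j 1, 0, 0) = - fst (snd p) $ j"
  unfolding Nm_def by (simp add: sum_axis_l)
lemma Nm_ey: "Nm p (0, axis j 1, 0) = 0"
  unfolding Nm_def by simp
lemma Nm_ez: "Nm p (0, 0, 1) = 1"
  unfolding Nm_def by simp

lemma Nm_xi0: "Nm p (xi0 a p) = Dn a p"
proof -
  have "(\<Sum>i\<in>UNIV. fst (snd p) $ i * (-2 * a$i * fst (snd p) $ i)) = (\<Sum>i\<in>UNIV. -2 * (a$i * (fst (snd p) $ i)^2))"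
    by (rule sum.cong) (simp_all add: power2_eq_square)
  also have "\<dots> = -2 * (\<Sum>i\<in>UNIV. a$i * (fst (snd p) $ i)^2)"
    by (simp add: sum_distrib_left)
  finally show ?thesis by (simp add: Nm_def xi0_def)
qed

lemma dD_xi0: "dD a p (xi0 a p) = 0"
  unfolding dD_def xi0_def by (intro sum.neutral) (simp add: algebra_simps)

lemma reeb_xi0:
  assumes "\<forall>i. a$i \<ge> 0"
  shows "is_reeb (eta a) (xi0 a)"
  unfolding is_reeb_def
proof (intro allI conjI)
  fix p :: "'a pt" and v :: "'a pt"
  have D0: "Dn a p \<noteq> 0" using Dn_ge1[OF assms, of p] by simp
  show "eta a p (xi0 a p) = 1" using D0 by (simp add: eta_alt Nm_xi0)
  have num: "-(\<Sum>i\<in>UNIV. fst (snd (xi0 a p)) $ i * fst v $ i) + (\<Sum>i\<in>UNIV. fst (snd v) $ i * fst (xi0 a p) $ i)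
      + dD a p v = 0"
    unfolding dD_def sum3 by (intro sum.neutral) (simp add: xi0_def algebra_simps)
  have "dform (eta a) p (xi0 a p) v =
     (-(\<Sum>i\<in>UNIV. fst (snd (xi0 a p)) $ i * fst v $ i) + (\<Sum>i\<in>UNIV. fst (snd v) $ i * fst (xi0 a p) $ i)
      + dD a p v) / Dn a p"
    using D0 by (simp add: dform_eta[OF assms] etaD_def dD_xi0 Nm_xi0 power2_eq_square field_simps)
  then show "dform (eta a) p (xi0 a p) v = 0" using num by simp
qed

lemma reeb_unique:
  assumes "\<forall>i. a$i \<ge> 0" and R: "is_reeb (eta a) \<xi>"
  shows "\<xi> p = xi0 a p"
proof -
  have D0: "Dn a p \<noteq> 0" using Dn_ge1[OF assms(1), of p] by simp
  have e1: "eta a p (\<xi> p) = 1" and dv: "\<And>v. dform (eta a) p (\<xi> p) v = 0"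
    using R unfolding is_reeb_def by blast+
  have N: "Nm p (\<xi> p) = Dn a p" using e1 D0 by (simp add: eta_alt field_simps)
  have dv': "etaD a p v (\<xi> p) - etaD a p (\<xi> p) v = 0" for v
    using dv[of v] by (simp add: dform_eta[OF assms(1)])
  have dDx: "dD a p (\<xi> p) = 0"
    using dv'[of "(0, 0, 1)"] D0 by (simp add: etaD_def Nm_ez dD_ez N)
  have W: "fst (snd (\<xi> p)) $ j = 2 * a$j * fst p $ j" for j
    using dv'[of "(axis j 1, 0, 0)"] D0
    by (simp add: etaD_def dD_ex dDx N Nm_ex sum_axis_l sum_axis_r power2_eq_square field_simps)
  have U: "fst (\<xi> p) $ j = -2 * a$j * fst (snd p) $ j" for j
    using dv'[of "(0, axis j 1, 0)"] D0
    by (simp add: etaD_def dD_ey dDx N Nm_ey sum_axis_l sum_axis_r power2_eq_square field_simps)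
  have C: "snd (snd (\<xi> p)) = Dn a p - 2 * (\<Sum>i\<in>UNIV. a$i * (fst (snd p) $ i)^2)"
  proof -
    have "(\<Sum>i\<in>UNIV. fst (snd p) $ i * fst (\<xi> p) $ i) = (\<Sum>i\<in>UNIV. -2 * (a$i * (fst (snd p) $ i)^2))"
      by (rule sum.cong) (simp_all add: U power2_eq_square)
    also have "\<dots> = -2 * (\<Sum>i\<in>UNIV. a$i * (fst (snd p) $ i)^2)"
      by (simp add: sum_distrib_left)
    finally show ?thesis using N by (simp add: Nm_def)
  qed
  show ?thesis
    unfolding xi0_def using U W C
    by (simp add: prod_eq_iff vec_eq_iff)
qed



definition RX :: "real^'n::finite \<Rightarrow> real \<Rightarrow> real^'n \<Rightarrow> real^'n \<Rightarrow> real^'n" where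
  "RX a t x y = (\<chi> i. x$i * cos (2 * a$i * t) - y$i * sin (2 * a$i * t))"
definition RY :: "real^'n::finite \<Rightarrow> real \<Rightarrow> real^'n \<Rightarrow> real^'n \<Rightarrow> real^'n" where
  "RY a t x y = (\<chi> i. x$i * sin (2 * a$i * t) + y$i * cos (2 * a$i * t))"
definition wfn :: "'n::finite pt \<Rightarrow> real" where
  "wfn p = snd (snd p) - (\<Sum>i\<in>UNIV. fst p $ i * fst (snd p) $ i) / 2"
definition phiF :: "real^'n::finite \<Rightarrow> real \<Rightarrow> 'n pt \<Rightarrow> 'n pt" where
  "phiF a t p = (RX a t (fst p) (fst (snd p)), RY a t (fst p) (fst (snd p)),
     wfn p + t + (\<Sum>i\<in>UNIV. RX a t (fst p) (fst (snd p)) $ i * RY a t (fst p) (fst (snd p)) $ i) / 2)"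
definition phi0 :: "real^'n::finite \<Rightarrow> real \<times> 'n pt \<Rightarrow> 'n pt" where
  "phi0 a tp = phiF a (fst tp) (snd tp)"

lemma smooth_phi0: "smooth (phi0 a)"
proof -
  have "smooth (\<lambda>tp::real \<times> 'a pt. phiF a (fst tp) (snd tp))"
    unfolding phiF_def RX_def RY_def wfn_def
    by (intro smooth_pair smooth_vec smooth_diff smooth_add smooth_mult smooth_cos smooth_sin smooth_nth
        smooth_fst smooth_snd smooth_id smooth_const smooth_sum smooth_divide_const finite_class.finite_UNIV)
  then show ?thesis unfolding phi0_def[abs_def] .
qed

lemma RX0: "RX a 0 x y = x" by (simp add: RX_def vec_eq_iff)
lemma RY0: "RY a 0 x y = y" by (simp add: RY_def vec_eq_iff)

lemma RX_comp: "RX a s (RX a t x y) (RY a t x y) = RX a (s + t) x y"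
  by (simp add: RX_def RY_def vec_eq_iff distrib_left cos_add sin_add algebra_simps)
lemma RY_comp: "RY a s (RX a t x y) (RY a t x y) = RY a (s + t) x y"
  by (simp add: RX_def RY_def vec_eq_iff distrib_left cos_add sin_add algebra_simps)

lemma wfn_phiF: "wfn (phiF a t p) = wfn p + t"
  by (simp add: wfn_def phiF_def)

lemma phiF_0: "phiF a 0 p = p"
  by (cases p) (simp add: phiF_def RX0 RY0 wfn_def)

lemma phiF_add: "phiF a (s + t) p = phiF a s (phiF a t p)"
proof -
  have q1: "fst (phiF a t p) = RX a t (fst p) (fst (snd p))" "fst (snd (phiF a t p)) = RY a t (fst p) (fst (snd p))"
    by (simp_all add: phiF_def)
  have "phiF a s (phiF a t p) = (RX a (s+t) (fst p) (fst (snd p)), RY a (s+t) (fst p) (fst (snd p)),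
     (wfn p + t) + s + (\<Sum>i\<in>UNIV. RX a (s+t) (fst p) (fst (snd p)) $ i * RY a (s+t) (fst p) (fst (snd p)) $ i) / 2)"
    by (simp only: phiF_def[of a s "phiF a t p"] q1 RX_comp RY_comp wfn_phiF)
  then show ?thesis unfolding phiF_def[of a "s+t" p] by (simp add: algebra_simps)
qed

lemma has_vector_derivative_vec:
  fixes f :: "'i::finite \<Rightarrow> real \<Rightarrow> 'b::real_normed_vector"
  assumes "\<And>i. (f i has_vector_derivative f' i) F"
  shows "((\<lambda>s. \<chi> i. f i s) has_vector_derivative (\<chi> i. f' i)) F"
proof -
  have "((\<lambda>s. \<chi> i. f i s) has_derivative (\<lambda>h. \<chi> i. h *\<^sub>R f' i)) F"
    using assms unfolding has_vector_derivative_def by (rule has_derivative_vec_lambda)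
  moreover have "(\<lambda>h. \<chi> i. h *\<^sub>R f' i) = (\<lambda>h. h *\<^sub>R (\<chi> i. f' i))"
    by (simp add: fun_eq_iff vec_eq_iff)
  ultimately show ?thesis unfolding has_vector_derivative_def by simp
qed

lemma dRX: "((\<lambda>s. RX a s x y $ i) has_real_derivative (-2 * a$i * RY a t x y $ i)) (at t)"
  unfolding RX_def RY_def by (auto intro!: derivative_eq_intros simp: algebra_simps)
lemma dRY: "((\<lambda>s. RY a s x y $ i) has_real_derivative (2 * a$i * RX a t x y $ i)) (at t)"
  unfolding RX_def RY_def by (auto intro!: derivative_eq_intros simp: algebra_simps)

lemma dZ: "((\<lambda>s. w + s + (\<Sum>i\<in>UNIV. RX a s x y $ i * RY a s x y $ i) / 2) has_real_derivative
   (1 + (\<Sum>i\<in>UNIV. (-2 * a$i * RY a t x y $ i) * RY a t x y $ i + (2 * a$i * RX a t x y $ i) * RX a t x y $ i) / 2)) (at t)"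
  by (auto intro!: derivative_eq_intros dRX dRY simp: algebra_simps)

lemma xi0_phiF: "xi0 a (phiF a t p) = ((\<chi> i. -2 * a$i * RY a t (fst p) (fst (snd p)) $ i),
   (\<chi> i. 2 * a$i * RX a t (fst p) (fst (snd p)) $ i),
   1 + (\<Sum>i\<in>UNIV. (-2 * a$i * RY a t (fst p) (fst (snd p)) $ i) * RY a t (fst p) (fst (snd p)) $ i
      + (2 * a$i * RX a t (fst p) (fst (snd p)) $ i) * RX a t (fst p) (fst (snd p)) $ i) / 2)"
proof -
  let ?X = "RX a t (fst p) (fst (snd p))" and ?Y = "RY a t (fst p) (fst (snd p))"
  have "Dn a (phiF a t p) - 2 * (\<Sum>i\<in>UNIV. a$i * (?Y $ i)^2)
     = 1 + (\<Sum>i\<in>UNIV. a$i * ((?X $ i)^2 + (?Y $ i)^2) - 2 * (a$i * (?Y $ i)^2))"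
    by (simp add: Dn_def phiF_def sum_subtractf sum_distrib_left)
  also have "\<dots> = 1 + (\<Sum>i\<in>UNIV. ((-2 * a$i * ?Y $ i) * ?Y $ i + (2 * a$i * ?X $ i) * ?X $ i) / 2)"
    by (simp only: add_left_cancel, rule sum.cong) (simp_all add: power2_eq_square field_simps)
  also have "\<dots> = 1 + (\<Sum>i\<in>UNIV. (-2 * a$i * ?Y $ i) * ?Y $ i + (2 * a$i * ?X $ i) * ?X $ i) / 2"
    by (simp only: sum_divide_distrib)
  finally show ?thesis by (simp add: xi0_def phiF_def)
qed

lemma dRXv: "((\<lambda>s. RX a s x y) has_vector_derivative (\<chi> i. -2 * a$i * RY a t x y $ i)) (at t)"
proof -
  have e: "(\<lambda>s. RX a s x y) = (\<lambda>s. \<chi> i. RX a s x y $ i)" by (simp add: vec_lambda_eta)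
  show ?thesis unfolding e
    by (intro has_vector_derivative_vec dRX[unfolded has_real_derivative_iff_has_vector_derivative])
qed
lemma dRYv: "((\<lambda>s. RY a s x y) has_vector_derivative (\<chi> i. 2 * a$i * RX a t x y $ i)) (at t)"
proof -
  have e: "(\<lambda>s. RY a s x y) = (\<lambda>s. \<chi> i. RY a s x y $ i)" by (simp add: vec_lambda_eta)
  show ?thesis unfolding e
    by (intro has_vector_derivative_vec dRY[unfolded has_real_derivative_iff_has_vector_derivative])
qed

lemma flow_phi0: "((\<lambda>s. phi0 a (s, p)) has_vector_derivative xi0 a (phi0 a (t, p))) (at t)"
  unfolding phi0_def fst_conv snd_conv xi0_phiF
  unfolding phiF_def
  by (intro has_vector_derivative_Pair dRXv dRYv
      dZ[unfolded has_real_derivative_iff_has_vector_derivative])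



lemma wfn_phi0: "wfn (phi0 a (t, p)) = wfn p + t"
  by (simp add: phi0_def wfn_phiF)

lemma smooth_wf2: "smooth (\<lambda>qp::'n::finite pt \<times> 'n pt. (wfn (fst qp) - wfn (snd qp), snd qp))"
  unfolding wfn_def
  by (intro smooth_pair smooth_vec smooth_diff smooth_add smooth_mult smooth_nth
        smooth_fst smooth_snd smooth_id smooth_const smooth_sum smooth_divide_const finite_class.finite_UNIV)

lemma cont_at_of_smooth: "smooth f \<Longrightarrow> continuous (at x) f"
  using smooth_continuous continuous_on_eq_continuous_at[OF open_UNIV] by blast

lemma action_phi0: "free_proper_R_action (phi0 a)"
  unfolding free_proper_R_action_def
proof (intro conjI allI impI)
  fix p :: "'a pt"
  show "phi0 a (0, p) = p" by (simp add: phi0_def phiF_0)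
next
  fix s t and p :: "'a pt"
  show "phi0 a (s + t, p) = phi0 a (s, phi0 a (t, p))" by (simp add: phi0_def phiF_add)
next
  fix t and p :: "'a pt"
  assume "phi0 a (t, p) = p"
  then have "wfn (phi0 a (t, p)) = wfn p" by simp
  then show "t = 0" by (simp add: wfn_phi0)
next
  fix K :: "('a pt \<times> 'a pt) set"
  assume K: "compact K"
  let ?S = "{(t, p). (phi0 a (t, p), p) \<in> K}"
  let ?h = "\<lambda>tp::real \<times> 'a pt. (phi0 a tp, snd tp)"
  let ?g = "\<lambda>qp::'a pt \<times> 'a pt. (wfn (fst qp) - wfn (snd qp), snd qp)"
  have sh: "smooth ?h" by (intro smooth_pair smooth_snd smooth_id smooth_phi0)
  have "?S = ?h -` K"
  proof (rule set_eqI)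
    fix x :: "real \<times> 'a pt"
    show "x \<in> ?S \<longleftrightarrow> x \<in> ?h -` K" by (cases x) simp
  qed
  moreover have "closed (?h -` K)"
    by (rule continuous_closed_vimage[OF compact_imp_closed[OF K] cont_at_of_smooth[OF sh]])
  ultimately have cl: "closed ?S" by simp
  have "compact (?g ` K)"
    by (rule compact_continuous_image[OF continuous_on_subset[OF smooth_continuous[OF smooth_wf2] subset_UNIV] K])
  then have bg: "bounded (?g ` K)" by (rule compact_imp_bounded)
  have "?S \<subseteq> ?g ` K"
  proof
    fix x assume "x \<in> ?S"
    then obtain t p where x: "x = (t, p)" and m: "(phi0 a (t, p), p) \<in> K" by blast
    have "?g (phi0 a (t, p), p) = (t, p)" by (simp add: wfn_phi0)
    then show "x \<in> ?g ` K" using m unfolding x by (rule image_eqI[OF sym])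
  qed
  then have "bounded ?S" by (rule bounded_subset[OF bg])
  then show "compact ?S" using cl by (simp add: compact_eq_bounded_closed)
qed



definition Sq :: "'n::finite pt \<Rightarrow> real" where
  "Sq p = (\<Sum>j\<in>UNIV. fst p $ j * fst p $ j + fst (snd p) $ j * fst (snd p) $ j)"
definition hc :: "'n::finite pt \<Rightarrow> complex" where
  "hc p = of_real (wfn p) - \<i> * of_real (Sq p / 4)"
definition zeta :: "'n::finite pt \<Rightarrow> 'n \<Rightarrow> complex" where
  "zeta p i = of_real (fst p $ i) - \<i> * of_real (fst (snd p) $ i)"
definition Fc :: "real^'n::finite \<Rightarrow> 'n pt \<Rightarrow> complex^'n" where
  "Fc a p = (\<chi> i. exp (2 * \<i> * of_real (a$i) * hc p) * zeta p i)"

definition dw :: "'n::finite pt \<Rightarrow> 'n pt \<Rightarrow> real" where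
  "dw p e = snd (snd e) - (\<Sum>j\<in>UNIV. fst p $ j * fst (snd e) $ j + fst e $ j * fst (snd p) $ j) / 2"
definition dS :: "'n::finite pt \<Rightarrow> 'n pt \<Rightarrow> real" where
  "dS p e = (\<Sum>j\<in>UNIV. (fst p $ j * fst e $ j + fst e $ j * fst p $ j)
      + (fst (snd p) $ j * fst (snd e) $ j + fst (snd e) $ j * fst (snd p) $ j))"
definition dh :: "'n::finite pt \<Rightarrow> 'n pt \<Rightarrow> complex" where
  "dh p e = of_real (dw p e) - \<i> * of_real (dS p e / 4)"
definition dzeta :: "'n::finite pt \<Rightarrow> 'n \<Rightarrow> complex" where
  "dzeta e i = of_real (fst e $ i) - \<i> * of_real (fst (snd e) $ i)"
definition Fd :: "real^'n::finite \<Rightarrow> 'n pt \<Rightarrow> 'n pt \<Rightarrow> complex^'n" where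
  "Fd a p e = (\<chi> i. exp (2 * \<i> * of_real (a$i) * hc p) * dzeta e i
      + exp (2 * \<i> * of_real (a$i) * hc p) * (2 * \<i> * of_real (a$i) * dh p e) * zeta p i)"

lemmas hd_div = bounded_linear.has_derivative[OF bounded_linear_divide]

lemma wfn_d: "(wfn has_derivative dw p) (at p)"
proof -
  have "((\<lambda>q. wfn q) has_derivative (\<lambda>e. dw p e)) (at p)"
    unfolding wfn_def dw_def
    by (intro has_derivative_diff hd_c3 hd_div has_derivative_sum has_derivative_mult hd_c1 hd_c2)
  then show ?thesis by simp
qed

lemma Sq_d: "(Sq has_derivative dS p) (at p)"
proof -
  have "((\<lambda>q. Sq q) has_derivative (\<lambda>e. dS p e)) (at p)"
    unfolding Sq_def dS_def
    by (intro has_derivative_add has_derivative_sum has_derivative_mult hd_c1 hd_c2)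
  then show ?thesis by simp
qed

lemma hc_d: "(hc has_derivative dh p) (at p)"
proof -
  have "((\<lambda>q. hc q) has_derivative (\<lambda>e. dh p e)) (at p)"
    unfolding hc_def dh_def
    by (intro has_derivative_diff has_derivative_of_real has_derivative_mult_right hd_div wfn_d Sq_d)
  then show ?thesis by simp
qed

lemma zeta_d: "((\<lambda>q. zeta q i) has_derivative (\<lambda>e. dzeta e i)) (at p)"
  unfolding zeta_def dzeta_def
  by (intro has_derivative_diff has_derivative_of_real has_derivative_mult_right hd_c1 hd_c2)

lemma exp_part_d: "((\<lambda>q. exp (2 * \<i> * of_real (a$i) * hc q)) has_derivative
   (\<lambda>e. exp (2 * \<i> * of_real (a$i) * hc p) * (2 * \<i> * of_real (a$i) * dh p e))) (at p)"
  using has_derivative_compose[OF has_derivative_mult_right[OF hc_d]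
      has_field_derivative_imp_has_derivative[OF DERIV_exp]] .

lemma Fc_d: "(Fc a has_derivative Fd a p) (at p)"
proof -
  have "((\<lambda>q. Fc a q) has_derivative (\<lambda>e. Fd a p e)) (at p)"
    unfolding Fc_def Fd_def
    by (intro has_derivative_vec_lambda has_derivative_mult[OF exp_part_d zeta_d])
  then show ?thesis by simp
qed

lemma smooth_Fc: "smooth (Fc a)"
proof -
  have "smooth (\<lambda>q::'a pt. Fc a q)"
    unfolding Fc_def hc_def zeta_def wfn_def Sq_def
    by (intro smooth_vec smooth_mult smooth_cexp smooth_diff smooth_add smooth_of_real smooth_const
        smooth_nth smooth_fst smooth_snd smooth_id smooth_sum smooth_divide_const finite_class.finite_UNIV)
  then show ?thesis by simp
qed

lemma Jcr_alt: "Jcr p v = (fst (snd v), - fst v, \<Sum>i\<in>UNIV. fst (snd p) $ i * fst (snd v) $ i)"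
  by (cases p; cases v) (simp add: Jcr_def)

lemma Dist_alt: "v \<in> Dist p \<longleftrightarrow> snd (snd v) = (\<Sum>i\<in>UNIV. fst (snd p) $ i * fst v $ i)"
  by (cases p; cases v) (simp add: Dist_def)

lemma sum_lin: "(\<And>j. A j - B j / 2 = C j) \<Longrightarrow> (\<Sum>j\<in>S. A j) - (\<Sum>j\<in>S. B j) / 2 = (\<Sum>j\<in>S. C j :: real)"
proof -
  assume h: "\<And>j. A j - B j / 2 = C j"
  have "(\<Sum>j\<in>S. A j - B j / 2) = (\<Sum>j\<in>S. C j)" using h by (intro sum.cong) auto
  then show ?thesis by (simp add: sum_subtractf sum_divide_distrib)
qed

lemma dzeta_J: "dzeta (Jcr p v) i = \<i> * dzeta v i"
  by (simp add: dzeta_def Jcr_alt complex_eq_iff)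

lemma dw_J: "v \<in> Dist p \<Longrightarrow> dw p (Jcr p v) = dS p v / 4"
proof -
  have "(\<Sum>j\<in>UNIV. fst (snd p) $ j * fst (snd v) $ j)
      - (\<Sum>j\<in>UNIV. fst p $ j * (- fst v $ j) + fst (snd v) $ j * fst (snd p) $ j) / 2
      = (\<Sum>j\<in>UNIV. ((fst p $ j * fst v $ j + fst v $ j * fst p $ j)
      + (fst (snd p) $ j * fst (snd v) $ j + fst (snd v) $ j * fst (snd p) $ j)) / 4)"
    by (rule sum_lin) (simp add: field_simps)
  then show ?thesis by (simp add: dw_def dS_def Jcr_alt sum_divide_distrib)
qed

lemma dS_J: "v \<in> Dist p \<Longrightarrow> - (dS p (Jcr p v) / 4) = dw p v"
proof -
  assume "v \<in> Dist p"
  then have D: "snd (snd v) = (\<Sum>i\<in>UNIV. fst (snd p) $ i * fst v $ i)" by (simp add: Dist_alt)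
  have "(\<Sum>j\<in>UNIV. fst (snd p) $ j * fst v $ j)
      - (\<Sum>j\<in>UNIV. fst p $ j * fst (snd v) $ j + fst v $ j * fst (snd p) $ j) / 2
      = (\<Sum>j\<in>UNIV. - (((fst p $ j * fst (snd v) $ j + fst (snd v) $ j * fst p $ j)
      + (fst (snd p) $ j * (- fst v $ j) + (- fst v $ j) * fst (snd p) $ j)) / 4))"
    by (rule sum_lin) (simp add: field_simps)
  then show ?thesis by (simp add: dw_def dS_def Jcr_alt sum_divide_distrib sum_negf D)
qed

lemma dh_J: "v \<in> Dist p \<Longrightarrow> dh p (Jcr p v) = \<i> * dh p v"
  using dw_J[of v p] dS_J[of v p] by (simp add: dh_def complex_eq_iff)

lemma Fd_J: "v \<in> Dist p \<Longrightarrow> Fd a p (Jcr p v) = \<i> *s Fd a p v"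
  by (simp add: Fd_def vec_eq_iff dh_J dzeta_J algebra_simps)



lemma E_alt: "exp (2 * \<i> * of_real c * hc p) = of_real (exp (c * Sq p / 2)) * cis (2 * c * wfn p)"
proof -
  have "2 * \<i> * of_real c * hc p = of_real (c * Sq p / 2) + \<i> * of_real (2 * c * wfn p)"
    by (simp add: hc_def complex_eq_iff)
  then show ?thesis by (simp only: exp_add cis_conv_exp exp_of_real)
qed

lemma Fc_alt: "Fc a p $ i = of_real (exp (a$i * Sq p / 2)) * cis (2 * a$i * wfn p) * zeta p i"
  by (simp add: Fc_def E_alt)

lemma Fd_surj:
  assumes "\<forall>i. a$i \<ge> 0"
  shows "surj (Fd a p)"
  unfolding surj_def
proof
  fix L :: "complex^'a"
  define E where "E i = exp (2 * \<i> * of_real (a$i) * hc p)" for i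
  define \<mu> where "\<mu> i = L$i / E i" for i
  define Rr where "Rr = (\<Sum>j\<in>UNIV. fst p $ j * Re (\<mu> j) - fst (snd p) $ j * Im (\<mu> j))"
  define T where "T = (\<Sum>j\<in>UNIV. a$j * (fst p $ j * fst p $ j + fst (snd p) $ j * fst (snd p) $ j))"
  define \<rho> where "\<rho> = Rr / (1 + T)"
  define e1 where "e1 = (\<chi> j. Re (\<mu> j) - \<rho> * a$j * fst p $ j)"
  define e2 where "e2 = (\<chi> j. - Im (\<mu> j) - \<rho> * a$j * fst (snd p) $ j)"
  define e where "e = (e1, e2, (\<Sum>j\<in>UNIV. fst p $ j * e2 $ j + e1 $ j * fst (snd p) $ j) / 2)"
  have T0: "T \<ge> 0" using assms by (auto simp: T_def intro!: sum_nonneg)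
  have nz: "1 + T \<noteq> 0" using T0 by linarith
  have "\<rho> * (1 + T) = Rr" using nz by (simp add: \<rho>_def)
  then have rho: "Rr = \<rho> + \<rho> * T" by (simp add: algebra_simps)
  have dw0: "dw p e = 0" by (simp add: dw_def e_def)
  have "dS p e = (\<Sum>j\<in>UNIV. 2 * (fst p $ j * Re (\<mu> j) - fst (snd p) $ j * Im (\<mu> j))
       - 2 * \<rho> * (a$j * (fst p $ j * fst p $ j + fst (snd p) $ j * fst (snd p) $ j)))"
    unfolding dS_def by (rule sum.cong) (simp_all add: e_def e1_def e2_def algebra_simps)
  also have "\<dots> = 2 * Rr - 2 * \<rho> * T"
    by (simp add: Rr_def T_def sum_subtractf sum_distrib_left)
  finally have dS2: "dS p e = 2 * \<rho>" by (simp add: rho algebra_simps)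
  have dh0: "dh p e = - \<i> * of_real (\<rho> / 2)" by (simp add: dh_def dw0 dS2)
  have dz: "dzeta e i = \<mu> i - of_real (\<rho> * a$i) * zeta p i" for i
    by (simp add: dzeta_def zeta_def e_def e1_def e2_def complex_eq_iff)
  have En: "E i \<noteq> 0" for i by (simp add: E_def)
  have "Fd a p e = L"
  proof (subst vec_eq_iff, intro allI)
    fix i
    have k: "2 * \<i> * of_real (a$i) * (- \<i> * of_real (\<rho> / 2)) = of_real (\<rho> * a$i)"
      by (simp add: complex_eq_iff)
    have "Fd a p e $ i = E i * dzeta e i + E i * (2 * \<i> * of_real (a$i) * dh p e) * zeta p i"
      by (simp add: Fd_def E_def)
    also have "\<dots> = E i * (\<mu> i - of_real (\<rho> * a$i) * zeta p i) + E i * of_real (\<rho> * a$i) * zeta p i"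
      by (simp only: dz dh0 k)
    also have "\<dots> = E i * \<mu> i" by (simp add: algebra_simps)
    also have "\<dots> = L $ i" using En by (simp add: \<mu>_def)
    finally show "Fd a p e $ i = L $ i" .
  qed
  then show "\<exists>e. L = Fd a p e" by metis
qed

lemma rot_norm:
  fixes x y c s :: real
  assumes "c * c + s * s = 1"
  shows "(x * c - y * s) * (x * c - y * s) + (x * s + y * c) * (x * s + y * c) = x * x + y * y"
proof -
  have "(x * c - y * s) * (x * c - y * s) + (x * s + y * c) * (x * s + y * c) = (x * x + y * y) * (c * c + s * s)"
    by (simp add: algebra_simps)
  then show ?thesis using assms by simp
qed

lemma Sq_phiF: "Sq (phiF a t p) = Sq p"
  unfolding Sq_def
proof (rule sum.cong)
  fix j :: 'a
  show "fst (phiF a t p) $ j * fst (phiF a t p) $ j + fst (snd (phiF a t p)) $ j * fst (snd (phiF a t p)) $ j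
     = fst p $ j * fst p $ j + fst (snd p) $ j * fst (snd p) $ j"
    unfolding phiF_def RX_def RY_def fst_conv snd_conv vec_lambda_beta
    by (rule rot_norm) (rule sin_cos_squared_add3)
qed simp

lemma zeta_phiF: "zeta (phiF a t p) i = zeta p i * cis (- (2 * a$i * t))"
  by (simp add: zeta_def phiF_def RX_def RY_def complex_eq_iff algebra_simps)

lemma Fc_phi0: "Fc a (phi0 a (t, p)) = Fc a p"
proof (subst vec_eq_iff, intro allI)
  fix i
  have c: "cis (2 * a$i * (wfn p + t)) * cis (- (2 * a$i * t)) = cis (2 * a$i * wfn p)"
    by (simp add: cis_mult algebra_simps)
  have "Fc a (phi0 a (t, p)) $ i
      = of_real (exp (a$i * Sq p / 2)) * (cis (2 * a$i * (wfn p + t)) * cis (- (2 * a$i * t))) * zeta p i"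
    by (simp add: Fc_alt phi0_def Sq_phiF wfn_phiF zeta_phiF mult_ac)
  then show "Fc a (phi0 a (t, p)) $ i = Fc a p $ i" by (simp add: c Fc_alt)
qed

definition nr :: "'n::finite pt \<Rightarrow> 'n \<Rightarrow> real" where
  "nr p i = fst p $ i * fst p $ i + fst (snd p) $ i * fst (snd p) $ i"

lemma Sq_nr: "Sq p = (\<Sum>i\<in>UNIV. nr p i)" by (simp add: Sq_def nr_def)
lemma nr_nonneg: "nr p i \<ge> 0" by (simp add: nr_def)

lemma normF: "(cmod (Fc a p $ i))^2 = exp (a$i * Sq p) * nr p i"
proof -
  have e: "(exp (a$i * Sq p / 2))^2 = exp (a$i * Sq p)"
    by (simp add: power2_eq_square exp_add[symmetric])
  have z: "(cmod (zeta p i))^2 = nr p i"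
    unfolding cmod_power2 by (simp add: zeta_def nr_def power2_eq_square)
  show ?thesis
    by (simp add: Fc_alt norm_mult power_mult_distrib e z)
qed

lemma Sq_le_aux:
  assumes a: "\<forall>i. a$i \<ge> 0" and eq: "\<And>i. exp (a$i * Sq p) * nr p i = exp (a$i * Sq q) * nr q i"
    and lt: "Sq p < Sq q"
  shows False
proof -
  have "nr q i \<le> nr p i" for i
  proof -
    have "a$i * Sq p \<le> a$i * Sq q" using a lt by (intro mult_left_mono) auto
    then have "exp (a$i * Sq p) \<le> exp (a$i * Sq q)" by simp
    then have "exp (a$i * Sq p) * nr q i \<le> exp (a$i * Sq q) * nr q i"
      using nr_nonneg by (rule mult_right_mono)
    also have "\<dots> = exp (a$i * Sq p) * nr p i" using eq by simp
    finally show ?thesis by simp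
  qed
  then have "Sq q \<le> Sq p" unfolding Sq_nr by (intro sum_mono) auto
  then show False using lt by simp
qed

lemma slice_inj:
  assumes a: "\<forall>i. a$i \<ge> 0" and F: "Fc a p = Fc a q" and W: "wfn p = wfn q"
  shows "p = q"
proof -
  have eq: "exp (a$i * Sq p) * nr p i = exp (a$i * Sq q) * nr q i" for i
    using F normF[of a p i] normF[of a q i] by simp
  have S: "Sq p = Sq q"
  proof (rule linorder_cases[of "Sq p" "Sq q"])
    assume "Sq p < Sq q" then show ?thesis using Sq_le_aux[OF a eq] by blast
  next
    assume "Sq q < Sq p" then show ?thesis using Sq_le_aux[OF a eq[symmetric]] by blast
  qed
  have z: "zeta p i = zeta q i" for i
  proof -
    have "of_real (exp (a$i * Sq p / 2)) * cis (2 * a$i * wfn p) * zeta p i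
        = of_real (exp (a$i * Sq p / 2)) * cis (2 * a$i * wfn p) * zeta q i"
      using F[unfolded vec_eq_iff, rule_format, of i] by (simp add: Fc_alt S W)
    moreover have "of_real (exp (a$i * Sq p / 2)) * cis (2 * a$i * wfn p) \<noteq> (0::complex)"
      by (simp add: cis_neq_zero)
    ultimately show ?thesis by simp
  qed
  have x: "fst p = fst q" and y: "fst (snd p) = fst (snd q)"
    using z by (auto simp: vec_eq_iff zeta_def complex_eq_iff)
  have "snd (snd p) = snd (snd q)" using W x y by (simp add: wfn_def)
  then show ?thesis using x y by (simp add: prod_eq_iff)
qed

lemma Fc_fiber:
  assumes a: "\<forall>i. a$i \<ge> 0"
  shows "Fc a p = Fc a q \<longleftrightarrow> (\<exists>t. q = phi0 a (t, p))"
proof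
  assume F: "Fc a p = Fc a q"
  define t where "t = wfn q - wfn p"
  have "phi0 a (t, p) = q"
    by (rule slice_inj[OF a]) (simp_all add: Fc_phi0 F wfn_phi0 t_def)
  then show "\<exists>t. q = phi0 a (t, p)" by metis
next
  assume "\<exists>t. q = phi0 a (t, p)"
  then obtain t where "q = phi0 a (t, p)" by blast
  then show "Fc a p = Fc a q" by (simp add: Fc_phi0)
qed



lemma Fc_surj:
  assumes a: "\<forall>i. a$i \<ge> (0::real)"
  shows "surj (Fc a)"
  unfolding surj_def
proof
  fix c :: "complex^'a"
  define g where "g s = s - (\<Sum>i\<in>UNIV. (cmod (c$i))^2 * exp (- (a$i * s)))" for s
  define Tt where "Tt = (\<Sum>i\<in>UNIV. (cmod (c$i))^2)"
  have Tt0: "Tt \<ge> 0" by (simp add: Tt_def sum_nonneg)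
  have g0: "g 0 \<le> 0" by (simp add: g_def sum_nonneg)
  have "(\<Sum>i\<in>UNIV. (cmod (c$i))^2 * exp (- (a$i * Tt))) \<le> (\<Sum>i\<in>UNIV. (cmod (c$i))^2)"
  proof (rule sum_mono)
    fix i :: 'a
    have "a$i * Tt \<ge> 0" using a Tt0 by simp
    then have "exp (- (a$i * Tt)) \<le> 1" by simp
    then show "(cmod (c$i))^2 * exp (- (a$i * Tt)) \<le> (cmod (c$i))^2"
      using mult_left_mono[of "exp (- (a$i * Tt))" 1 "(cmod (c$i))^2"] by simp
  qed
  then have gT: "0 \<le> g Tt" by (simp add: g_def Tt_def)
  have "\<forall>x. 0 \<le> x \<and> x \<le> Tt \<longrightarrow> isCont g x"
    unfolding g_def by (intro allI impI continuous_intros)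
  then obtain s where s: "g s = 0"
    using IVT[of g 0 0 Tt] g0 gT Tt0 by blast
  then have sS: "s = (\<Sum>i\<in>UNIV. (cmod (c$i))^2 * exp (- (a$i * s)))" by (simp add: g_def)
  define ex where "ex i = exp (- (a$i * s / 2))" for i
  have ex2: "ex i * ex i = exp (- (a$i * s))" for i by (simp add: ex_def exp_add[symmetric])
  define p :: "'a pt" where "p = ((\<chi> i. Re (c$i) * ex i), (\<chi> i. - Im (c$i) * ex i),
     (\<Sum>i\<in>UNIV. (Re (c$i) * ex i) * (- Im (c$i) * ex i)) / 2)"
  have w0: "wfn p = 0" by (simp add: wfn_def p_def)
  have "Sq p = (\<Sum>i\<in>UNIV. (cmod (c$i))^2 * exp (- (a$i * s)))"
    unfolding Sq_def
  proof (rule sum.cong)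
    fix i :: 'a
    show "fst p $ i * fst p $ i + fst (snd p) $ i * fst (snd p) $ i = (cmod (c$i))^2 * exp (- (a$i * s))"
      unfolding cmod_power2 ex2[symmetric] by (simp add: p_def power2_eq_square algebra_simps)
  qed simp
  then have Sqs: "Sq p = s" using sS by simp
  have "Fc a p = c"
  proof (subst vec_eq_iff, intro allI)
    fix i
    have e1: "exp (a$i * s / 2) * ex i = 1" by (simp add: ex_def exp_add[symmetric])
    have z: "zeta p i = of_real (ex i) * c$i" by (simp add: zeta_def p_def complex_eq_iff)
    have "Fc a p $ i = of_real (exp (a$i * s / 2)) * zeta p i" unfolding Fc_alt Sqs w0 by simp
    also have "\<dots> = of_real (exp (a$i * s / 2) * ex i) * c$i" by (simp add: z)
    also have "\<dots> = c$i" by (simp add: e1)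
    finally show "Fc a p $ i = c $ i" .
  qed
  then show "\<exists>p. c = Fc a p" by metis
qed

theorem lemma6p3:
  fixes a :: "real^'n"
  assumes "\<forall>i. a$i \<ge> 0"
  shows "(\<exists>\<xi>. is_reeb (eta a) \<xi>) \<and>
    (\<forall>\<xi>. is_reeb (eta a) \<xi> \<longrightarrow>
      (\<exists>\<phi> :: real \<times> 'n pt \<Rightarrow> 'n pt.
         smooth \<phi> \<and>
         (\<forall>p t. ((\<lambda>s. \<phi> (s, p)) has_vector_derivative \<xi> (\<phi> (t, p))) (at t)) \<and>
         free_proper_R_action \<phi> \<and>
         (\<exists>(F :: 'n pt \<Rightarrow> complex^'n) F'.
            smooth F \<and>
            (\<forall>p. (F has_derivative F' p) (at p)) \<and>
            (\<forall>p. surj (F' p)) \<and>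
            surj F \<and>
            (\<forall>p q. F p = F q \<longleftrightarrow> (\<exists>t. q = \<phi> (t, p))) \<and>
            (\<forall>p v. v \<in> Dist p \<longrightarrow> F' p (Jcr p v) = \<i> *s F' p v))))"
proof (intro conjI allI impI)
  show "\<exists>\<xi>. is_reeb (eta a) \<xi>" using reeb_xi0[OF assms] by blast
next
  fix \<xi> assume R: "is_reeb (eta a) \<xi>"
  have fl: "\<forall>p t. ((\<lambda>s. phi0 a (s, p)) has_vector_derivative \<xi> (phi0 a (t, p))) (at t)"
    unfolding reeb_unique[OF assms R] using flow_phi0 by blast
  have "smooth (Fc a) \<and> (\<forall>p. (Fc a has_derivative Fd a p) (at p)) \<and> (\<forall>p. surj (Fd a p)) \<and> surj (Fc a) \<and>
      (\<forall>p q. Fc a p = Fc a q \<longleftrightarrow> (\<exists>t. q = phi0 a (t, p))) \<and>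
      (\<forall>p v. v \<in> Dist p \<longrightarrow> Fd a p (Jcr p v) = \<i> *s Fd a p v)"
    using smooth_Fc Fc_d Fd_surj[OF assms] Fc_surj[OF assms] Fc_fiber[OF assms] Fd_J by blast
  then show "\<exists>\<phi> :: real \<times> 'n pt \<Rightarrow> 'n pt.
         smooth \<phi> \<and>
         (\<forall>p t. ((\<lambda>s. \<phi> (s, p)) has_vector_derivative \<xi> (\<phi> (t, p))) (at t)) \<and>
         free_proper_R_action \<phi> \<and>
         (\<exists>(F :: 'n pt \<Rightarrow> complex^'n) F'.
            smooth F \<and>
            (\<forall>p. (F has_derivative F' p) (at p)) \<and>
            (\<forall>p. surj (F' p)) \<and>
            surj F \<and>
            (\<forall>p q. F p = F q \<longleftrightarrow> (\<exists>t. q = \<phi> (t, p))) \<and>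
            (\<forall>p v. v \<in> Dist p \<longrightarrow> F' p (Jcr p v) = \<i> *s F' p v))"
    using smooth_phi0 fl action_phi0 by blast
qed


end
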